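(* Assume source and target traces are related via ${\sim}=\langle \overset{\circ}{\sim},\overset{\bullet}{\sim}\rangle$, i.e. $s\sim t\iff s^\circ\overset{\circ}{\sim}t^\circ \wedge s^\bullet\overset{\bullet}{\sim}t^\bullet$, where $\overset{\bullet}{\sim}$ is a total and surjective map from source output projections to target output projections. Let $\phi_T\in\mathit{uco}(2^{\mathit{Trace}_T^\circ})$ and $\rho_T\in\mathit{uco}(2^{\mathit{Trace}_T^\bullet})$, and assume that for all $s,t$, $s^\circ\overset{\circ}{\sim}t^\circ$ implies $\phi_T(t^\circ)=\phi_T(\tilde\tau^\circ(s^\circ))$. If the compilation chain satisfies $\mathit{CC}^{\sim}$ and a source program $W$ satisfies $\mathit{ANI}[\phi_S^\#,\rho_S^\#]$, then $W{\downarrow}$ satisfies $\mathit{ANI}[\phi_T,\rho_T]$, where $\phi_S^\#=\tilde\sigma^\circ\circ\phi_T\circ\tilde\tau^\circ$ and $\rho_S^\#=\tilde\sigma^\bullet\circ\rho_T\circ\tilde\tau^\bullet$.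
   Context: A compilation chain consists of source (whole) programs $W$, target programs, sets $\mathit{Trace}_S,\mathit{Trace}_T$ of source and target traces, semantics relations $W\rightsquigarrow t$ at both levels, and a compiler $W\mapsto W{\downarrow}$; $\mathit{beh}(W)=\{t\mid W\rightsquigarrow t\}$, and $W$ satisfies a hyperproperty $H$ iff $\mathit{beh}(W)\in H$. $\mathit{CC}^{\sim}$ states: for every $W$ and $t$, if $W{\downarrow}\rightsquigarrow t$ then there is $s\sim t$ with $W\rightsquigarrow s$. Each trace $t$ has a disjoint input projection $t^\circ$ and output projection $t^\bullet$; $\mathit{Trace}^\circ,\mathit{Trace}^\bullet$ are the sets of input and output projections. "Total and surjective map from source to target" means each source output projection is related to exactly one target output projection and every target output projection is related to some source one. $\tilde\tau^\circ,\tilde\sigma^\circ$ are the existential and universal images of $\overset{\circ}{\sim}$: $\tilde\tau^\circ(\pi)=\{t^\circ\mid\exists s^\circ\in\pi.\ s^\circ\overset{\circ}{\sim}t^\circ\}$, $\tilde\sigma^\circ(\pi)=\{s^\circ\mid\forall t^\circ.\ s^\circ\overset{\circ}{\sim}t^\circ\Rightarrow t^\circ\in\pi\}$; $\tilde\tau^\bullet,\tilde\sigma^\bullet$ are defined analogously from $\overset{\bullet}{\sim}$. A single element $x$ as argument abbreviates $\{x\}$. An upper closure operator ($\mathit{uco}$) on a powerset is a monotone, idempotent, extensive map. $\mathit{ANI}[\phi,\rho]=\{\pi\mid\forall t_1,t_2\in\pi.\ \phi(t_1^\circ)=\phi(t_2^\circ)\Rightarrow\rho(t_1^\bullet)=\rho(t_2^\bullet)\}$.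 *)

theory Defs
  imports Main
begin

text \<open>Traces are elements of types; the trace sets Trace_S, Trace_T are the whole types.
  Input/output projections are functions; Trace^in and Trace^out are their ranges.\<close>

definition beh :: "('w \<Rightarrow> 't \<Rightarrow> bool) \<Rightarrow> 'w \<Rightarrow> 't set" where
  "beh sem W = {t. sem W t}"

definition sat :: "('w \<Rightarrow> 't \<Rightarrow> bool) \<Rightarrow> 'w \<Rightarrow> 't set set \<Rightarrow> bool" where
  "sat sem W H \<longleftrightarrow> beh sem W \<in> H"

definition CC :: "('w \<Rightarrow> 's \<Rightarrow> bool) \<Rightarrow> ('p \<Rightarrow> 't \<Rightarrow> bool) \<Rightarrow> ('w \<Rightarrow> 'p)
                  \<Rightarrow> ('s \<Rightarrow> 't \<Rightarrow> bool) \<Rightarrow> bool" where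
  "CC semS semT cmp rel \<longleftrightarrow>
     (\<forall>W t. semT (cmp W) t \<longrightarrow> (\<exists>s. rel s t \<and> semS W s))"

definition pair_rel :: "('s \<Rightarrow> 'si) \<Rightarrow> ('s \<Rightarrow> 'so) \<Rightarrow> ('t \<Rightarrow> 'ti) \<Rightarrow> ('t \<Rightarrow> 'to)
     \<Rightarrow> ('si \<Rightarrow> 'ti \<Rightarrow> bool) \<Rightarrow> ('so \<Rightarrow> 'to \<Rightarrow> bool) \<Rightarrow> 's \<Rightarrow> 't \<Rightarrow> bool" where
  "pair_rel inS outS inT outT ri ro s t \<longleftrightarrow> ri (inS s) (inT t) \<and> ro (outS s) (outT t)"

definition total_surj_map :: "'a set \<Rightarrow> 'b set \<Rightarrow> ('a \<Rightarrow> 'b \<Rightarrow> bool) \<Rightarrow> bool" where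
  "total_surj_map A B r \<longleftrightarrow>
     (\<forall>a\<in>A. \<exists>!b. b \<in> B \<and> r a b) \<and> (\<forall>b\<in>B. \<exists>a\<in>A. r a b)"

definition tau_img :: "'b set \<Rightarrow> ('a \<Rightarrow> 'b \<Rightarrow> bool) \<Rightarrow> 'a set \<Rightarrow> 'b set" where
  "tau_img B r \<pi> = {b \<in> B. \<exists>a\<in>\<pi>. r a b}"

definition sigma_img :: "'a set \<Rightarrow> 'b set \<Rightarrow> ('a \<Rightarrow> 'b \<Rightarrow> bool) \<Rightarrow> 'b set \<Rightarrow> 'a set" where
  "sigma_img A B r \<pi> = {a \<in> A. \<forall>b\<in>B. r a b \<longrightarrow> b \<in> \<pi>}"

definition uco_on :: "'a set \<Rightarrow> ('a set \<Rightarrow> 'a set) \<Rightarrow> bool" where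
  "uco_on A f \<longleftrightarrow>
     (\<forall>X. X \<subseteq> A \<longrightarrow> f X \<subseteq> A) \<and>
     (\<forall>X Y. X \<subseteq> A \<longrightarrow> Y \<subseteq> A \<longrightarrow> X \<subseteq> Y \<longrightarrow> f X \<subseteq> f Y) \<and>
     (\<forall>X. X \<subseteq> A \<longrightarrow> f (f X) = f X) \<and>
     (\<forall>X. X \<subseteq> A \<longrightarrow> X \<subseteq> f X)"

definition ANI :: "('t \<Rightarrow> 'i) \<Rightarrow> ('t \<Rightarrow> 'o) \<Rightarrow> ('i set \<Rightarrow> 'i set) \<Rightarrow> ('o set \<Rightarrow> 'o set)
                   \<Rightarrow> 't set set" where
  "ANI inp out \<phi> \<rho> = {\<pi>. \<forall>t1\<in>\<pi>. \<forall>t2\<in>\<pi>.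
      \<phi> {inp t1} = \<phi> {inp t2} \<longrightarrow> \<rho> {out t1} = \<rho> {out t2}}"

end

theory Submission
  imports Defs
begin

theorem theorem4p3:
  fixes semS :: "'w \<Rightarrow> 's \<Rightarrow> bool" and semT :: "'p \<Rightarrow> 't \<Rightarrow> bool"
    and cmp :: "'w \<Rightarrow> 'p"
    and inS :: "'s \<Rightarrow> 'si" and outS :: "'s \<Rightarrow> 'so"
    and inT :: "'t \<Rightarrow> 'ti" and outT :: "'t \<Rightarrow> 'to"
    and rin :: "'si \<Rightarrow> 'ti \<Rightarrow> bool" and rout :: "'so \<Rightarrow> 'to \<Rightarrow> bool"
    and \<phi>T :: "'ti set \<Rightarrow> 'ti set" and \<rho>T :: "'to set \<Rightarrow> 'to set"
    and W :: 'w
  assumes rout_map: "total_surj_map (range outS) (range outT) rout"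
    and uco_phi: "uco_on (range inT) \<phi>T"
    and uco_rho: "uco_on (range outT) \<rho>T"
    and phi_cond: "\<forall>s t. rin (inS s) (inT t) \<longrightarrow>
                      \<phi>T {inT t} = \<phi>T (tau_img (range inT) rin {inS s})"
    and cc: "CC semS semT cmp (pair_rel inS outS inT outT rin rout)"
    and src: "sat semS W (ANI inS outS
                 (sigma_img (range inS) (range inT) rin \<circ> \<phi>T \<circ> tau_img (range inT) rin)
                 (sigma_img (range outS) (range outT) rout \<circ> \<rho>T \<circ> tau_img (range outT) rout))"
  shows "sat semT (cmp W) (ANI inT outT \<phi>T \<rho>T)"
proof -
  let ?tau = "tau_img (range outT) rout"
  let ?sig = "sigma_img (range outS) (range outT) rout"
  have tot: "\<forall>a\<in>range outS. \<exists>!b. b \<in> range outT \<and> rout a b"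
    using rout_map unfolding total_surj_map_def by (rule conjunct1)
  have sur: "\<forall>b\<in>range outT. \<exists>a\<in>range outS. rout a b"
    using rout_map unfolding total_surj_map_def by (rule conjunct2)
  have fun1: "?tau {outS s} = {outT t}" if "rout (outS s) (outT t)" for s t
  proof -
    have "\<forall>b\<in>range outT. rout (outS s) b \<longrightarrow> b = outT t"
    proof (intro ballI impI)
      fix b assume b: "b \<in> range outT" "rout (outS s) b"
      have "\<exists>!b. b \<in> range outT \<and> rout (outS s) b" using tot by (rule bspec) (rule rangeI)
      then show "b = outT t" using b that rangeI by (metis (no_types))
    qed
    note U = this
    show ?thesis
    proof (rule equalityI; rule subsetI)
      fix b assume "b \<in> ?tau {outS s}"
      then have b: "b \<in> range outT" "rout (outS s) b" unfolding tau_img_def by simp_all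
      have "b = outT t" using bspec[OF U b(1)] b(2) by (rule mp)
      then show "b \<in> {outT t}" by simp
    next
      fix b assume "b \<in> {outT t}"
      then have "b = outT t" by simp
      then show "b \<in> ?tau {outS s}" unfolding tau_img_def using that by simp
    qed
  qed
  have sub: "\<rho>T {outT t} \<subseteq> range outT" for t
    using uco_rho unfolding uco_on_def by auto
  have inj: "X = Y" if "X \<subseteq> range outT" "Y \<subseteq> range outT" "?sig X = ?sig Y" for X Y
  proof -
    have "b \<in> X \<longleftrightarrow> b \<in> Y" if b: "b \<in> range outT" for b
    proof -
      obtain a where a: "a \<in> range outS" "rout a b" using bspec[OF sur b] by (elim bexE) blast
      have u: "\<forall>b'\<in>range outT. rout a b' \<longrightarrow> b' = b"
      proof (intro ballI impI)
        fix b' assume b': "b' \<in> range outT" "rout a b'"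
        have "\<exists>!b. b \<in> range outT \<and> rout a b" using bspec[OF tot a(1)] .
        then show "b' = b" using b' a b by (metis (no_types))
      qed
      have key: "b \<in> Z \<longleftrightarrow> a \<in> ?sig Z" for Z
      proof
        assume bZ: "b \<in> Z"
        have "\<forall>b'\<in>range outT. rout a b' \<longrightarrow> b' \<in> Z"
        proof (intro ballI impI)
          fix b' assume "b' \<in> range outT" "rout a b'"
          then have "b' = b" using u by blast
          then show "b' \<in> Z" using bZ by simp
        qed
        then show "a \<in> ?sig Z" unfolding sigma_img_def using a(1) by (intro CollectI conjI)
      next
        assume "a \<in> ?sig Z"
        then have "\<forall>b'\<in>range outT. rout a b' \<longrightarrow> b' \<in> Z" unfolding sigma_img_def mem_Collect_eq by (rule conjunct2)
        then show "b \<in> Z" using b a(2) by blast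
      qed
      have "b \<in> X \<longleftrightarrow> a \<in> ?sig X" by (rule key)
      moreover have "b \<in> Y \<longleftrightarrow> a \<in> ?sig Y" by (rule key)
      ultimately show ?thesis using \<open>?sig X = ?sig Y\<close> by simp
    qed
    then show ?thesis using that(1,2) by blast
  qed
  show ?thesis
    unfolding sat_def ANI_def
  proof (intro CollectI ballI impI)
    fix t1 t2 assume t1: "t1 \<in> beh semT (cmp W)" and t2: "t2 \<in> beh semT (cmp W)"
      and eq: "\<phi>T {inT t1} = \<phi>T {inT t2}"
    obtain s1 where s1: "rin (inS s1) (inT t1)" "rout (outS s1) (outT t1)" "semS W s1"
      using cc t1 unfolding CC_def beh_def pair_rel_def by blast
    obtain s2 where s2: "rin (inS s2) (inT t2)" "rout (outS s2) (outT t2)" "semS W s2"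
      using cc t2 unfolding CC_def beh_def pair_rel_def by blast
    have phieq: "\<phi>T (tau_img (range inT) rin {inS s1}) = \<phi>T (tau_img (range inT) rin {inS s2})"
    proof -
      have "\<phi>T {inT t1} = \<phi>T (tau_img (range inT) rin {inS s1})" using phi_cond s1(1) by blast
      moreover have "\<phi>T {inT t2} = \<phi>T (tau_img (range inT) rin {inS s2})" using phi_cond s2(1) by blast
      ultimately show ?thesis using eq by simp
    qed
    have "?sig (\<rho>T (?tau {outS s1})) = ?sig (\<rho>T (?tau {outS s2}))"
    proof -
      have m: "s1 \<in> beh semS W" "s2 \<in> beh semS W" using s1(3) s2(3) unfolding beh_def by auto
      from src have "\<forall>x\<in>beh semS W. \<forall>y\<in>beh semS W.
        (sigma_img (range inS) (range inT) rin \<circ> \<phi>T \<circ> tau_img (range inT) rin) {inS x} =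
        (sigma_img (range inS) (range inT) rin \<circ> \<phi>T \<circ> tau_img (range inT) rin) {inS y} \<longrightarrow>
        (?sig \<circ> \<rho>T \<circ> ?tau) {outS x} = (?sig \<circ> \<rho>T \<circ> ?tau) {outS y}"
        unfolding sat_def ANI_def by (rule CollectD)
      from bspec[OF bspec[OF this m(1)] m(2)] phieq show ?thesis by simp
    qed
    then have "?sig (\<rho>T {outT t1}) = ?sig (\<rho>T {outT t2})"
      using fun1 s1(2) s2(2) by simp
    then show "\<rho>T {outT t1} = \<rho>T {outT t2}" by (rule inj[OF sub sub])
  qed
qed

end
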